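(* Let $r\ge2$ and $\Lambda=\Phi^+_{A_{r+1}}\setminus\{\varepsilon_{r+1}-\varepsilon_{r+2}\}$. Then \[K_\Lambda(\varepsilon_1+\varepsilon_2-\varepsilon_{r+1}-\varepsilon_{r+2})=\mathsf{js}(\langle1,1\rangle,\langle1,1\rangle,r).\]
   Context: $\Phi^+_{A_{r+1}}=\{\varepsilon_i-\varepsilon_j:1\le i<j\le r+2\}\subset\mathbb{R}^{r+2}$; for $\Lambda\subseteq\Phi^+_{A_{r+1}}$, $K_\Lambda(\mu)$ is the number of finite multisets of elements of $\Lambda$ summing to $\mu$. A juggling state is a finitely supported integer vector $\langle s_1,s_2,\dots\rangle$ indexed by heights (trailing zeros omitted). A juggling sequence of length $n$ from $\mathbf{a}$ to $\mathbf{b}$ is a sequence $(\mathbf{s}_0,\dots,\mathbf{s}_n)$ with $\mathbf{s}_0=\mathbf{a}$, $\mathbf{s}_n=\mathbf{b}$ such that for each $i$ there are nonnegative integers $c^{(i)}_k$ (finitely many nonzero) with $\sum_k c^{(i)}_k=(\mathbf{s}_{i-1})_1$ and $(\mathbf{s}_i)_k=(\mathbf{s}_{i-1})_{k+1}+c^{(i)}_k$ for all $k\ge1$; $\mathsf{js}(\mathbf{a},\mathbf{b},n)$ is the number of such sequences. *)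

theory Defs
  imports Complex_Main "HOL-Library.Multiset"
begin

text \<open>Vectors of R^(r+2) are represented as functions nat => real, coordinate i
  (1 <= i <= r+2) being the value at i; all other values are 0.\<close>

definition eps :: "nat \<Rightarrow> nat \<Rightarrow> real" where
  "eps i = (\<lambda>k. if k = i then 1 else 0)"

definition posroots_A :: "nat \<Rightarrow> (nat \<Rightarrow> real) set" where
  "posroots_A m = {(\<lambda>k. eps i k - eps j k) | i j. 1 \<le> i \<and> i < j \<and> j \<le> m + 1}"

definition vsum_mset :: "(nat \<Rightarrow> real) multiset \<Rightarrow> nat \<Rightarrow> real" where
  "vsum_mset M = (\<lambda>k. \<Sum>v\<in>#M. v k)"

definition kostant :: "(nat \<Rightarrow> real) set \<Rightarrow> (nat \<Rightarrow> real) \<Rightarrow> nat" where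
  "kostant L \<mu> = card {M. set_mset M \<subseteq> L \<and> vsum_mset M = \<mu>}"

text \<open>Juggling states: finitely supported integer vectors; we index 0-based,
  so s 0 is the entry at height 1, s k the entry at height k+1.\<close>
definition jstate :: "(nat \<Rightarrow> int) \<Rightarrow> bool" where
  "jstate s \<longleftrightarrow> finite {k. s k \<noteq> 0}"

definition jstep :: "(nat \<Rightarrow> int) \<Rightarrow> (nat \<Rightarrow> int) \<Rightarrow> bool" where
  "jstep s t \<longleftrightarrow> (\<exists>c :: nat \<Rightarrow> nat. finite {k. c k \<noteq> 0} \<and>
      int (sum c {k. c k \<noteq> 0}) = s 0 \<and> (\<forall>k. t k = s (Suc k) + int (c k)))"

definition js :: "(nat \<Rightarrow> int) \<Rightarrow> (nat \<Rightarrow> int) \<Rightarrow> nat \<Rightarrow> nat" where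
  "js a b n = card {ss. length ss = Suc n \<and> (\<forall>s\<in>set ss. jstate s) \<and>
      ss ! 0 = a \<and> ss ! n = b \<and> (\<forall>i<n. jstep (ss ! i) (ss ! Suc i))}"

definition state11 :: "nat \<Rightarrow> int" where
  "state11 = (\<lambda>k. if k < 2 then 1 else 0)"

end

theory Submission imports Defs begin

definition EE :: "nat \<Rightarrow> (nat \<times> nat) set" where
  "EE r = {(i,j). 1 \<le> i \<and> i < j \<and> j \<le> r+2 \<and> i \<le> r}"

lemma EE_sub: "EE r \<subseteq> {1..r+2} \<times> {1..r+2}" by (auto simp: EE_def)
lemma finite_EE: "finite (EE r)" by (rule finite_subset[OF EE_sub]) simp

definition outf :: "nat \<Rightarrow> (nat \<Rightarrow> nat \<Rightarrow> nat) \<Rightarrow> nat \<Rightarrow> nat" where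
  "outf r f k = (\<Sum>j\<in>{1..r+2}. f k j)"
definition inf' :: "nat \<Rightarrow> (nat \<Rightarrow> nat \<Rightarrow> nat) \<Rightarrow> nat \<Rightarrow> nat" where
  "inf' r f k = (\<Sum>i\<in>{1..r+2}. f i k)"

definition supp :: "nat \<Rightarrow> (nat \<Rightarrow> nat \<Rightarrow> nat) \<Rightarrow> bool" where
  "supp r f \<longleftrightarrow> (\<forall>i j. (i,j) \<notin> EE r \<longrightarrow> f i j = 0)"

lemma supp0: "supp r f \<Longrightarrow> \<not>(1 \<le> i \<and> i < j \<and> j \<le> r+2 \<and> i \<le> r) \<Longrightarrow> f i j = 0"
  unfolding supp_def EE_def by simp
lemma suppD: "supp r f \<Longrightarrow> f i j \<noteq> 0 \<Longrightarrow> 1 \<le> i \<and> i < j \<and> j \<le> r+2 \<and> i \<le> r"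
  using supp0 by metis

definition FF :: "nat \<Rightarrow> (nat \<Rightarrow> nat \<Rightarrow> nat) set" where
  "FF r = {f. supp r f \<and> (\<forall>t<r. outf r f (Suc t) = (if t < 2 then 1 else 0) + inf' r f (Suc t))
            \<and> inf' r f (r+1) = 1 \<and> inf' r f (r+2) = 1}"

definition st :: "(nat \<Rightarrow> nat \<Rightarrow> nat) \<Rightarrow> nat \<Rightarrow> nat \<Rightarrow> int" where
  "st f t k = (if t + k < 2 then 1 else 0) + (\<Sum>i\<in>{1..t}. int (f i (t+k+1)))"

lemma st_step: "st f (Suc t) k = st f t (Suc k) + int (f (Suc t) (t+k+2))"
  unfolding st_def by (simp add: add.commute add.left_commute)

lemma st_0: "st f 0 = state11"
  by (auto simp: st_def state11_def)

lemma st_big: assumes s: "supp r f" and k: "r + 2 \<le> k" shows "st f t k = 0"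
  unfolding st_def using k by (auto intro!: sum.neutral supp0[OF s])

lemma jstate_st: "supp r f \<Longrightarrow> jstate (st f t)"
  unfolding jstate_def
  by (rule finite_subset[of _ "{..<r+2}"]) (auto dest: st_big[of r f _ t] simp: not_less)

lemma st_zero_k: "supp r f \<Longrightarrow> t < r \<Longrightarrow>
   st f t 0 = (if t < 2 then 1 else 0) + int (inf' r f (Suc t))"
proof -
  assume s: "supp r f" and t: "t < r"
  have "(\<Sum>i\<in>{1..t}. f i (Suc t)) = (\<Sum>i\<in>{1..r+2}. f i (Suc t))"
    by (rule sum.mono_neutral_left) (use t in \<open>auto intro!: supp0[OF s]\<close>)
  then have "(\<Sum>i\<in>{1..t}. int (f i (t + 0 + 1))) = int (inf' r f (Suc t))"
    unfolding inf'_def by (metis add_0_right Suc_eq_plus1 of_nat_sum)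
  moreover have "(if t + 0 < 2 then 1 else 0) = (if t < 2 then (1::int) else 0)" by simp
  ultimately show ?thesis unfolding st_def by presburger
qed

lemma st_final: "supp r f \<Longrightarrow> 2 \<le> r \<Longrightarrow>
   st f r k = (if k = 0 then int (inf' r f (r+1)) else if k = 1 then int (inf' r f (r+2)) else 0)"
proof -
  assume s: "supp r f" and r: "2 \<le> r"
  have a: "(\<Sum>i\<in>{1..r}. f i (r+1)) = (\<Sum>i\<in>{1..r+2}. f i (r+1))"
    by (rule sum.mono_neutral_left) (auto intro!: supp0[OF s])
  have b: "(\<Sum>i\<in>{1..r}. f i (r+2)) = (\<Sum>i\<in>{1..r+2}. f i (r+2))"
    by (rule sum.mono_neutral_left) (auto intro!: supp0[OF s])
  have c: "k \<ge> 2 \<Longrightarrow> (\<Sum>i\<in>{1..r}. f i (r+k+1)) = 0"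
    by (rule sum.neutral) (auto intro!: supp0[OF s])
  have r2: "\<not> r + k < 2" using r by simp
  show ?thesis
  proof (cases "k = 0")
    case True then show ?thesis using a r2 unfolding st_def inf'_def by (simp add: of_nat_sum)
  next
    case k0: False
    show ?thesis
    proof (cases "k = 1")
      case True then show ?thesis using b r2 unfolding st_def inf'_def
        by (simp add: of_nat_sum add.commute)
    next
      case False then have k2: "k \<ge> 2" using k0 by simp
      show ?thesis using c[OF k2] r2 k0 False unfolding st_def
        by (simp flip: of_nat_sum)
    qed
  qed
qed

lemma jstep_iff: assumes s: "supp r f" and t: "t < r"
  shows "jstep (st f t) (st f (Suc t)) \<longleftrightarrow> int (outf r f (Suc t)) = st f t 0"
proof -
  define g where "g k = f (Suc t) (t+k+2)" for k
  have key: "sum g {k. g k \<noteq> 0} = outf r f (Suc t)"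
  proof -
    have inj: "inj_on (\<lambda>k. t+k+2) {k. g k \<noteq> 0}" by (auto simp: inj_on_def)
    have img: "(\<lambda>k. t+k+2) ` {k. g k \<noteq> 0} = {j. f (Suc t) j \<noteq> 0}"
    proof
      show "(\<lambda>k. t+k+2) ` {k. g k \<noteq> 0} \<subseteq> {j. f (Suc t) j \<noteq> 0}" by (auto simp: g_def)
      show "{j. f (Suc t) j \<noteq> 0} \<subseteq> (\<lambda>k. t+k+2) ` {k. g k \<noteq> 0}"
      proof
        fix j assume "j \<in> {j. f (Suc t) j \<noteq> 0}"
        then have "f (Suc t) j \<noteq> 0" by simp
        then have "(Suc t, j) \<in> EE r" using s unfolding supp_def by metis
        then obtain k where "j = t + k + 2" by (auto simp: EE_def intro: that[of "j - t - 2"])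
        then show "j \<in> (\<lambda>k. t+k+2) ` {k. g k \<noteq> 0}" using \<open>f (Suc t) j \<noteq> 0\<close>
          by (auto simp: g_def)
      qed
    qed
    have "sum g {k. g k \<noteq> 0} = sum (f (Suc t)) ((\<lambda>k. t+k+2) ` {k. g k \<noteq> 0})"
      using sum.reindex[OF inj, of "f (Suc t)"] by (simp add: g_def o_def)
    also have "\<dots> = sum (f (Suc t)) {j. f (Suc t) j \<noteq> 0}" by (simp only: img)
    also have "\<dots> = outf r f (Suc t)" unfolding outf_def
    proof (rule sum.mono_neutral_left)
      show "{j. f (Suc t) j \<noteq> 0} \<subseteq> {1..r+2}"
      proof
        fix j assume "j \<in> {j. f (Suc t) j \<noteq> 0}"
        then show "j \<in> {1..r+2}" using suppD[OF s, of "Suc t" j] by auto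
      qed
    qed auto
    finally show ?thesis .
  qed
  have fin: "finite {k. g k \<noteq> 0}"
  proof (rule finite_subset[of _ "{..<r+2}"])
    show "{k. g k \<noteq> 0} \<subseteq> {..<r+2}"
    proof
      fix k assume "k \<in> {k. g k \<noteq> 0}"
      then show "k \<in> {..<r+2}" using suppD[OF s, of "Suc t" "t+k+2"] by (auto simp: g_def)
    qed
  qed auto
  show ?thesis
  proof
    assume "jstep (st f t) (st f (Suc t))"
    then obtain c :: "nat \<Rightarrow> nat" where c: "int (sum c {k. c k \<noteq> 0}) = st f t 0"
      "\<forall>k. st f (Suc t) k = st f t (Suc k) + int (c k)" unfolding jstep_def by blast
    have "c = g"
    proof
      fix k show "c k = g k" using spec[OF c(2), of k] st_step[of f t k] by (simp add: g_def)
    qed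
    then show "int (outf r f (Suc t)) = st f t 0" using c(1) key by metis
  next
    assume a: "int (outf r f (Suc t)) = st f t 0"
    show "jstep (st f t) (st f (Suc t))" unfolding jstep_def
    proof (intro exI[of _ g] conjI allI)
      show "finite {k. g k \<noteq> 0}" by (rule fin)
      show "int (sum g {k. g k \<noteq> 0}) = st f t 0" using a key by simp
      fix k show "st f (Suc t) k = st f t (Suc k) + int (g k)" by (simp add: g_def st_step)
    qed
  qed
qed


definition Phi :: "nat \<Rightarrow> (nat \<Rightarrow> nat \<Rightarrow> nat) \<Rightarrow> (nat \<Rightarrow> int) list" where
  "Phi r f = map (st f) [0..<Suc r]"

definition Psi :: "nat \<Rightarrow> (nat \<Rightarrow> int) list \<Rightarrow> nat \<Rightarrow> nat \<Rightarrow> nat" where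
  "Psi r ss = (\<lambda>i j. if (i,j) \<in> EE r then nat ((ss!i) (j-i-1) - (ss!(i-1)) (j-i)) else 0)"

definition BB :: "nat \<Rightarrow> (nat \<Rightarrow> int) list set" where
  "BB r = {ss. length ss = Suc r \<and> (\<forall>s\<in>set ss. jstate s) \<and>
      ss ! 0 = state11 \<and> ss ! r = state11 \<and> (\<forall>i<r. jstep (ss ! i) (ss ! Suc i))}"

lemma Phi_nth: "t \<le> r \<Longrightarrow> Phi r f ! t = st f t"
  unfolding Phi_def by (simp del: upt_Suc add: nth_map_upt)

lemma final_iff: assumes s: "supp r f" and r: "2 \<le> r"
  shows "st f r = state11 \<longleftrightarrow> inf' r f (r+1) = 1 \<and> inf' r f (r+2) = 1"
proof
  assume a: "st f r = state11"
  have "st f r 0 = 1" "st f r 1 = 1" using a by (auto simp: state11_def)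
  then show "inf' r f (r+1) = 1 \<and> inf' r f (r+2) = 1" using st_final[OF s r] by auto
next
  assume "inf' r f (r+1) = 1 \<and> inf' r f (r+2) = 1"
  then show "st f r = state11"
    by (auto simp: st_final[OF s r] state11_def fun_eq_iff)
qed

lemma F_iff: assumes s: "supp r f" and r: "2 \<le> r"
  shows "f \<in> FF r \<longleftrightarrow> Phi r f \<in> BB r"
proof -
  have "Phi r f \<in> BB r \<longleftrightarrow> st f r = state11 \<and> (\<forall>t<r. jstep (st f t) (st f (Suc t)))"
  proof -
    have "\<forall>s\<in>set (Phi r f). jstate s" unfolding Phi_def using jstate_st[OF s] by auto
    moreover have "length (Phi r f) = Suc r" by (simp add: Phi_def)
    moreover have "Phi r f ! 0 = state11" using Phi_nth[of 0 r f] st_0 by simp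
    moreover have "Phi r f ! r = st f r" by (simp add: Phi_nth)
    moreover have "(\<forall>i<r. jstep (Phi r f ! i) (Phi r f ! Suc i)) \<longleftrightarrow>
                   (\<forall>t<r. jstep (st f t) (st f (Suc t)))" by (simp add: Phi_nth)
    ultimately show ?thesis unfolding BB_def by simp
  qed
  also have "\<dots> \<longleftrightarrow> f \<in> FF r"
  proof -
    have "(\<forall>t<r. jstep (st f t) (st f (Suc t))) \<longleftrightarrow>
          (\<forall>t<r. outf r f (Suc t) = (if t < 2 then 1 else 0) + inf' r f (Suc t))"
    proof -
      have "jstep (st f t) (st f (Suc t)) \<longleftrightarrow>
            outf r f (Suc t) = (if t < 2 then 1 else 0) + inf' r f (Suc t)" if "t < r" for t
        using jstep_iff[OF s that] st_zero_k[OF s that] by auto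
      then show ?thesis by blast
    qed
    then show ?thesis unfolding FF_def using s final_iff[OF s r] by auto
  qed
  finally show ?thesis by simp
qed

lemma Psi_Phi: assumes s: "supp r f" shows "Psi r (Phi r f) = f"
proof (intro ext)
  fix i j
  show "Psi r (Phi r f) i j = f i j"
  proof (cases "(i,j) \<in> EE r")
    case True
    then have ij: "1 \<le> i" "i < j" "j \<le> r+2" "i \<le> r" by (auto simp: EE_def)
    obtain t where t: "i = Suc t" using ij by (cases i) auto
    obtain k where k: "j = t + k + 2" using ij t by (auto intro: that[of "j - t - 2"])
    have "Phi r f ! i = st f (Suc t)" "Phi r f ! (i - 1) = st f t"
      using ij t by (auto simp: Phi_nth)
    moreover have "j - i - 1 = k" "j - i = Suc k" using t k by auto
    ultimately show ?thesis using True by (simp add: Psi_def st_step t k)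
  next
    case False then show ?thesis using s by (simp add: Psi_def supp_def)
  qed
qed

lemma Psi_supp: "supp r (Psi r ss)"
  unfolding supp_def Psi_def by auto

locale BBl =
  fixes r :: nat and ss :: "(nat \<Rightarrow> int) list"
  assumes B: "ss \<in> BB r" and r: "2 \<le> r"
begin

lemma len: "length ss = Suc r" using B by (simp add: BB_def)
lemma first: "ss ! 0 = state11" using B by (simp add: BB_def)
lemma last: "ss ! r = state11" using B by (simp add: BB_def)

lemma step: "t < r \<Longrightarrow> \<exists>c::nat\<Rightarrow>nat. \<forall>k. (ss!(Suc t)) k = (ss!t) (Suc k) + int (c k)"
  using B unfolding BB_def jstep_def by blast

lemma mono: "t < r \<Longrightarrow> (ss!t) (Suc k) \<le> (ss!(Suc t)) k"
  using step[of t] by force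

lemma nonneg: "t \<le> r \<Longrightarrow> 0 \<le> (ss!t) k"
proof (induction t arbitrary: k)
  case 0 then show ?case by (simp add: first state11_def)
next
  case (Suc t)
  then have "0 \<le> (ss!t) (Suc k)" by simp
  also have "\<dots> \<le> (ss!(Suc t)) k" using mono[of t k] Suc by simp
  finally show ?case .
qed

lemma dec: "d \<le> r \<Longrightarrow> (ss!(r-d)) (k+d) \<le> (ss!r) k"
proof (induction d)
  case 0 then show ?case by simp
next
  case (Suc d)
  have "(ss!(r - Suc d)) (k + Suc d) = (ss!(r - Suc d)) (Suc (k + d))" by simp
  also have "\<dots> \<le> (ss!(Suc (r - Suc d))) (k + d)" using mono[of "r - Suc d" "k+d"] Suc by simp
  also have "Suc (r - Suc d) = r - d" using Suc by simp
  also have "(ss!(r-d)) (k+d) \<le> (ss!r) k" using Suc by simp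
  finally show ?case .
qed

lemma zero: assumes t: "t \<le> r" and k: "r + 2 \<le> k + t" shows "(ss!t) k = 0"
proof -
  define d where "d = r - t"
  define k' where "k' = k - d"
  have "t = r - d" "k = k' + d" "2 \<le> k'" "d \<le> r" using t k by (auto simp: d_def k'_def)
  then have "(ss!t) k \<le> (ss!r) k'" using dec[of d k'] by simp
  also have "\<dots> = 0" using \<open>2 \<le> k'\<close> by (simp add: last state11_def)
  finally show ?thesis using nonneg[OF t, of k] by simp
qed

lemma st_Psi: "t \<le> r \<Longrightarrow> st (Psi r ss) t = ss ! t"
proof (induction t)
  case 0 then show ?case by (simp add: st_0 first)
next
  case (Suc t)
  show ?case
  proof
    fix k
    have IH: "st (Psi r ss) t = ss ! t" using Suc by simp
    have "st (Psi r ss) (Suc t) k = (ss!t) (Suc k) + int (Psi r ss (Suc t) (t+k+2))"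
      by (simp add: st_step IH)
    also have "\<dots> = (ss!(Suc t)) k"
    proof (cases "t + k + 2 \<le> r + 2")
      case True
      then have "(Suc t, t+k+2) \<in> EE r" using Suc.prems by (auto simp: EE_def)
      then have "Psi r ss (Suc t) (t+k+2) = nat ((ss!(Suc t)) k - (ss!t) (Suc k))"
        by (simp add: Psi_def)
      then show ?thesis using mono[of t k] Suc.prems by simp
    next
      case False
      then have "(Suc t, t+k+2) \<notin> EE r" by (auto simp: EE_def)
      then have "Psi r ss (Suc t) (t+k+2) = 0" by (simp add: Psi_def)
      moreover have "(ss!(Suc t)) k = 0" using zero[of "Suc t" k] Suc.prems False by simp
      moreover have "(ss!t) (Suc k) = 0" using zero[of t "Suc k"] Suc.prems False by simp
      ultimately show ?thesis by simp
    qed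
    finally show "st (Psi r ss) (Suc t) k = (ss ! Suc t) k" .
  qed
qed

lemma Phi_Psi: "Phi r (Psi r ss) = ss"
  by (rule nth_equalityI) (auto simp: len Phi_def st_Psi simp del: upt_Suc)

end

lemma bij_FB: assumes r: "2 \<le> r" shows "bij_betw (Phi r) (FF r) (BB r)"
proof (rule bij_betw_byWitness[where f'="Psi r"])
  show "\<forall>f\<in>FF r. Psi r (Phi r f) = f" by (auto simp: FF_def Psi_Phi)
  show "\<forall>ss\<in>BB r. Phi r (Psi r ss) = ss" using BBl.Phi_Psi r by (auto simp: BBl_def)
  show "Phi r ` FF r \<subseteq> BB r"
  proof
    fix x assume "x \<in> Phi r ` FF r"
    then obtain f where f: "f \<in> FF r" "x = Phi r f" by auto
    then have "supp r f" by (simp add: FF_def)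
    then show "x \<in> BB r" using F_iff[OF _ r] f by blast
  qed
  show "Psi r ` BB r \<subseteq> FF r"
  proof
    fix f assume "f \<in> Psi r ` BB r"
    then obtain ss where ss: "ss \<in> BB r" "f = Psi r ss" by auto
    then have "Phi r f \<in> BB r" using BBl.Phi_Psi[of r ss] r by (simp add: BBl_def)
    then show "f \<in> FF r" using F_iff[OF _ r] ss Psi_supp by blast
  qed
qed


definition rt :: "nat \<Rightarrow> nat \<Rightarrow> nat \<Rightarrow> real" where
  "rt i j = (\<lambda>k. eps i k - eps j k)"

lemma rt_inj: assumes "i < j" "i' < j'" "rt i j = rt i' j'" shows "i = i' \<and> j = j'"
proof -
  have "rt i j i = 1" "rt i j j = -1" using assms(1) by (simp_all add: rt_def eps_def)
  then have a: "rt i' j' i = 1" and b: "rt i' j' j = -1" using assms(3) by simp_all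
  from a have "i = i'" by (auto simp: rt_def eps_def split: if_splits)
  moreover from b have "j = j'" by (auto simp: rt_def eps_def split: if_splits)
  ultimately show ?thesis by simp
qed

lemma rt_inj_EE: "e \<in> EE r \<Longrightarrow> e' \<in> EE r \<Longrightarrow> rt (fst e) (snd e) = rt (fst e') (snd e') \<Longrightarrow> e = e'"
  using rt_inj by (cases e; cases e') (auto simp: EE_def)

definition Lam :: "nat \<Rightarrow> (nat \<Rightarrow> real) set" where
  "Lam r = posroots_A (r + 1) - {(\<lambda>k. eps (r + 1) k - eps (r + 2) k)}"

lemma Lam_eq: "Lam r = (\<lambda>e. rt (fst e) (snd e)) ` EE r"
proof
  show "Lam r \<subseteq> (\<lambda>e. rt (fst e) (snd e)) ` EE r"
  proof
    fix x assume "x \<in> Lam r"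
    then obtain i j where ij: "1 \<le> i" "i < j" "j \<le> r + 2" "x = rt i j"
      and ne: "x \<noteq> rt (r+1) (r+2)"
      unfolding Lam_def posroots_A_def rt_def by auto
    have "i \<le> r"
    proof (rule ccontr)
      assume "\<not> i \<le> r"
      then have h1: "i = r+1" and h2: "j = r+2" using ij by auto
      have "x = rt (r+1) (r+2)" using ij(4) unfolding h1 h2 .
      with ne show False by simp
    qed
    then have "(i,j) \<in> EE r" using ij by (simp add: EE_def)
    then show "x \<in> (\<lambda>e. rt (fst e) (snd e)) ` EE r" using ij by force
  qed
next
  show "(\<lambda>e. rt (fst e) (snd e)) ` EE r \<subseteq> Lam r"
  proof
    fix x assume "x \<in> (\<lambda>e. rt (fst e) (snd e)) ` EE r"
    then obtain i j where ij: "(i,j) \<in> EE r" "x = rt i j" by auto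
    then have "1 \<le> i" "i < j" "j \<le> r + 2" "i \<le> r" by (auto simp: EE_def)
    moreover have "rt i j \<noteq> rt (r+1) (r+2)" using rt_inj[of i j "r+1" "r+2"] \<open>i \<le> r\<close> \<open>i < j\<close> by auto
    ultimately show "x \<in> Lam r" using ij unfolding Lam_def posroots_A_def rt_def by auto
  qed
qed

definition PhiA :: "nat \<Rightarrow> (nat \<Rightarrow> real) multiset \<Rightarrow> nat \<Rightarrow> nat \<Rightarrow> nat" where
  "PhiA r M = (\<lambda>i j. if (i,j) \<in> EE r then count M (rt i j) else 0)"

definition PsiA :: "nat \<Rightarrow> (nat \<Rightarrow> nat \<Rightarrow> nat) \<Rightarrow> (nat \<Rightarrow> real) multiset" where
  "PsiA r f = (\<Sum>e\<in>EE r. replicate_mset (f (fst e) (snd e)) (rt (fst e) (snd e)))"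

lemma count_PsiA: "count (PsiA r f) x = (\<Sum>e\<in>EE r. if x = rt (fst e) (snd e) then f (fst e) (snd e) else 0)"
  unfolding PsiA_def by (simp add: count_sum)

lemma count_PsiA_rt: assumes "e0 \<in> EE r" shows "count (PsiA r f) (rt (fst e0) (snd e0)) = f (fst e0) (snd e0)"
proof -
  have "count (PsiA r f) (rt (fst e0) (snd e0)) = (\<Sum>e\<in>EE r. if e = e0 then f (fst e) (snd e) else 0)"
    unfolding count_PsiA by (rule sum.cong) (use assms rt_inj_EE in auto)
  also have "\<dots> = f (fst e0) (snd e0)" using assms finite_EE by simp
  finally show ?thesis .
qed

lemma count_PsiA_out: assumes "x \<notin> (\<lambda>e. rt (fst e) (snd e)) ` EE r" shows "count (PsiA r f) x = 0"
  unfolding count_PsiA by (rule sum.neutral) (use assms in auto)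

lemma set_PsiA: "set_mset (PsiA r f) \<subseteq> (\<lambda>e. rt (fst e) (snd e)) ` EE r"
  using count_PsiA_out by (metis count_eq_zero_iff subsetI)

lemma vsum_add: "vsum_mset (A + B) k = vsum_mset A k + vsum_mset B k"
  by (simp add: vsum_mset_def)

lemma vsum_sum: "finite S \<Longrightarrow> vsum_mset (\<Sum>e\<in>S. g e) k = (\<Sum>e\<in>S. vsum_mset (g e) k)"
  by (induction S rule: finite_induct) (auto simp: vsum_add, simp add: vsum_mset_def)

lemma vsum_rep: "vsum_mset (replicate_mset n v) k = real n * v k"
  by (simp add: vsum_mset_def)

definition V :: "nat \<Rightarrow> (nat \<Rightarrow> nat \<Rightarrow> nat) \<Rightarrow> nat \<Rightarrow> real" where
  "V r f k = (\<Sum>e\<in>EE r. real (f (fst e) (snd e)) * rt (fst e) (snd e) k)"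

lemma vsum_PsiA: "vsum_mset (PsiA r f) k = V r f k"
  unfolding PsiA_def V_def by (simp add: vsum_sum finite_EE vsum_rep)

lemma V_formula: assumes s: "supp r f"
  shows "V r f k = (if k \<in> {1..r+2} then real (outf r f k) - real (inf' r f k) else 0)"
proof -
  let ?I = "{1..r+2}"
  let ?g = "\<lambda>e. real (f (fst e) (snd e)) * rt (fst e) (snd e) k"
  have "V r f k = (\<Sum>e\<in>?I \<times> ?I. ?g e)"
    unfolding V_def
  proof (rule sum.mono_neutral_left)
    show "\<forall>e\<in>?I \<times> ?I - EE r. ?g e = 0"
    proof
      fix e assume "e \<in> ?I \<times> ?I - EE r"
      then have "f (fst e) (snd e) = 0" using s by (cases e) (simp add: supp_def)
      then show "?g e = 0" by simp
    qed
    show "EE r \<subseteq> ?I \<times> ?I" by (rule EE_sub)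
  qed simp
  also have "\<dots> = (\<Sum>i\<in>?I. \<Sum>j\<in>?I. real (f i j) * (eps i k - eps j k))"
    unfolding sum.cartesian_product rt_def by (rule sum.cong) (auto simp: case_prod_beta)
  also have "\<dots> = (\<Sum>i\<in>?I. \<Sum>j\<in>?I. real (f i j) * eps i k) - (\<Sum>i\<in>?I. \<Sum>j\<in>?I. real (f i j) * eps j k)"
    by (simp add: right_diff_distrib sum_subtractf)
  also have "(\<Sum>i\<in>?I. \<Sum>j\<in>?I. real (f i j) * eps i k) = (\<Sum>i\<in>?I. if i = k then real (outf r f i) else 0)"
    by (rule sum.cong) (auto simp: eps_def outf_def)
  also have "(\<Sum>i\<in>?I. \<Sum>j\<in>?I. real (f i j) * eps j k) = (\<Sum>j\<in>?I. \<Sum>i\<in>?I. real (f i j) * eps j k)"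
    by (rule sum.swap)
  also have "\<dots> = (\<Sum>j\<in>?I. if j = k then real (inf' r f j) else 0)"
    by (rule sum.cong) (auto simp: eps_def inf'_def)
  finally show ?thesis by (simp add: sum.delta')
qed

definition mu :: "nat \<Rightarrow> nat \<Rightarrow> real" where
  "mu r = (\<lambda>k. eps 1 k + eps 2 k - eps (r + 1) k - eps (r + 2) k)"

lemma outf_high: assumes s: "supp r f" and "r < i" shows "outf r f i = 0"
  unfolding outf_def by (rule sum.neutral) (use assms in \<open>auto intro!: supp0[OF s]\<close>)

lemma mu_Suc: "t < r \<Longrightarrow> mu r (Suc t) = (if t < 2 then 1 else 0)"
  by (simp add: mu_def eps_def)
lemma mu_r1: "2 \<le> r \<Longrightarrow> mu r (Suc r) = -1" "2 \<le> r \<Longrightarrow> mu r (Suc (Suc r)) = -1"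
  by (simp_all add: mu_def eps_def)
lemma mu_out: "k = 0 \<or> r + 2 < k \<Longrightarrow> mu r k = 0"
  by (auto simp: mu_def eps_def)

lemma cons_iff: assumes s: "supp r f" and r: "2 \<le> r"
  shows "(\<forall>k. V r f k = mu r k) \<longleftrightarrow> f \<in> FF r"
proof
  assume a: "\<forall>k. V r f k = mu r k"
  have "outf r f (Suc t) = (if t < 2 then 1 else 0) + inf' r f (Suc t)" if t: "t < r" for t
  proof -
    have "V r f (Suc t) = mu r (Suc t)" using a by simp
    then have "real (outf r f (Suc t)) - real (inf' r f (Suc t)) = (if t < 2 then 1 else 0)"
      using t by (simp add: V_formula[OF s] mu_Suc)
    then show ?thesis by (simp split: if_splits)
  qed
  moreover have "inf' r f (r+1) = 1"
  proof -
    have "V r f (r+1) = mu r (r+1)" using a by simp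
    then have "real (outf r f (r+1)) - real (inf' r f (r+1)) = -1"
      using r by (simp add: V_formula[OF s] mu_r1)
    then show ?thesis using outf_high[OF s, of "r+1"] by simp
  qed
  moreover have "inf' r f (r+2) = 1"
  proof -
    have "V r f (r+2) = mu r (r+2)" using a by simp
    then have "real (outf r f (r+2)) - real (inf' r f (r+2)) = -1"
      using r by (simp add: V_formula[OF s] mu_r1)
    then show ?thesis using outf_high[OF s, of "r+2"] by simp
  qed
  ultimately show "f \<in> FF r" using s by (simp add: FF_def)
next
  assume F: "f \<in> FF r"
  then have F0: "\<And>t. t < r \<Longrightarrow> outf r f (Suc t) = (if t < 2 then 1 else 0) + inf' r f (Suc t)"
    and F1: "inf' r f (r+1) = 1" and F2: "inf' r f (r+2) = 1" by (simp_all add: FF_def)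
  show "\<forall>k. V r f k = mu r k"
  proof
    fix k
    show "V r f k = mu r k"
    proof (cases "k \<in> {1..r+2}")
      case False
      then have "k = 0 \<or> r + 2 < k" by auto
      then have m: "mu r k = 0" by (rule mu_out)
      have "V r f k = 0" by (simp only: V_formula[OF s] False if_False)
      then show ?thesis using m by simp
    next
      case True
      then have "(1 \<le> k \<and> k \<le> r) \<or> k = r+1 \<or> k = r+2" by auto
      moreover
      {
        assume k: "1 \<le> k \<and> k \<le> r"
        define t where "t = k - 1"
        have kt: "k = Suc t" "t < r" using k by (auto simp: t_def)
        have "V r f k = real (outf r f (Suc t)) - real (inf' r f (Suc t))"
          using True by (simp add: V_formula[OF s] kt)
        also have "\<dots> = (if t < 2 then 1 else 0)" using F0[OF kt(2)] by simp
        also have "\<dots> = mu r k" using mu_Suc[OF kt(2)] kt(1) by simp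
        finally have ?thesis .
      }
      moreover
      {
        assume k: "k = r+1"
        have ?thesis using True F1 outf_high[OF s, of k] k r by (simp add: V_formula[OF s] mu_r1)
      }
      moreover
      {
        assume k: "k = r+2"
        have ?thesis using True F2 outf_high[OF s, of k] k r by (simp add: V_formula[OF s] mu_r1)
      }
      ultimately show ?thesis by blast
    qed
  qed
qed

definition AA :: "nat \<Rightarrow> (nat \<Rightarrow> real) multiset set" where
  "AA r = {M. set_mset M \<subseteq> Lam r \<and> vsum_mset M = mu r}"

lemma PsiA_PhiA: assumes "set_mset M \<subseteq> Lam r" shows "PsiA r (PhiA r M) = M"
proof (rule multiset_eqI)
  fix x
  show "count (PsiA r (PhiA r M)) x = count M x"
  proof (cases "x \<in> (\<lambda>e. rt (fst e) (snd e)) ` EE r")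
    case True
    then obtain e where e: "e \<in> EE r" "x = rt (fst e) (snd e)" by auto
    then show ?thesis using count_PsiA_rt[OF e(1)] by (cases e) (simp add: PhiA_def)
  next
    case False
    then have "x \<notin># M" using assms Lam_eq by auto
    then have "count M x = 0" by (simp add: count_eq_zero_iff)
    moreover have "count (PsiA r (PhiA r M)) x = 0" by (rule count_PsiA_out[OF False])
    ultimately show ?thesis by simp
  qed
qed

lemma PhiA_PsiA: assumes "supp r f" shows "PhiA r (PsiA r f) = f"
proof (intro ext)
  fix i j
  show "PhiA r (PsiA r f) i j = f i j"
    using count_PsiA_rt[of "(i,j)" r f] assms by (auto simp: PhiA_def supp_def)
qed

lemma bij_AF: assumes r: "2 \<le> r" shows "bij_betw (PhiA r) (AA r) (FF r)"
proof (rule bij_betw_byWitness[where f'="PsiA r"])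
  show "\<forall>M\<in>AA r. PsiA r (PhiA r M) = M" using PsiA_PhiA by (auto simp: AA_def)
  show "\<forall>f\<in>FF r. PhiA r (PsiA r f) = f" using PhiA_PsiA by (auto simp: FF_def)
  show "PhiA r ` AA r \<subseteq> FF r"
  proof
    fix x assume "x \<in> PhiA r ` AA r"
    then obtain M where M: "M \<in> AA r" "x = PhiA r M" by auto
    have s: "supp r x" using M by (simp add: supp_def PhiA_def)
    have "V r x k = mu r k" for k
      using M PsiA_PhiA[of M r] vsum_PsiA[of r x k] by (auto simp: AA_def)
    then show "x \<in> FF r" using cons_iff[OF s r] by blast
  qed
  show "PsiA r ` FF r \<subseteq> AA r"
  proof
    fix x assume "x \<in> PsiA r ` FF r"
    then obtain f where f: "f \<in> FF r" "x = PsiA r f" by auto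
    have s: "supp r f" using f by (simp add: FF_def)
    have "vsum_mset x = mu r"
      using f cons_iff[OF s r] vsum_PsiA[of r f] by auto
    moreover have "set_mset x \<subseteq> Lam r" using f set_PsiA Lam_eq by auto
    ultimately show "x \<in> AA r" by (simp add: AA_def)
  qed
qed

theorem mainTheorem14:
  fixes r :: nat
  assumes "r \<ge> 2"
  shows "kostant (posroots_A (r + 1) - {(\<lambda>k. eps (r + 1) k - eps (r + 2) k)})
           (\<lambda>k. eps 1 k + eps 2 k - eps (r + 1) k - eps (r + 2) k)
         = js state11 state11 r"
proof -
  have "kostant (posroots_A (r + 1) - {(\<lambda>k. eps (r + 1) k - eps (r + 2) k)})
           (\<lambda>k. eps 1 k + eps 2 k - eps (r + 1) k - eps (r + 2) k) = card (AA r)"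
    unfolding kostant_def AA_def Lam_def mu_def by simp
  also have "\<dots> = card (FF r)" using bij_betw_same_card[OF bij_AF[OF assms]] .
  also have "\<dots> = card (BB r)" using bij_betw_same_card[OF bij_FB[OF assms]] .
  also have "\<dots> = js state11 state11 r" unfolding js_def BB_def by simp
  finally show ?thesis .
qed

end
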